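(* Fix a reflection matrix $\mathbf\Phi$ and let $(\{\mathbf W_k^\star\}_{k\in\mathcal K},\mathbf R_0^\star,u^\star)$ be an optimal solution of problem (SDR3.3). Define, for each $k\in\mathcal K$, $$\mathbf w_k^{\mathrm{opt,I}}=(\mathbf h_k^H\mathbf W_k^\star\mathbf h_k)^{-1/2}\,\mathbf W_k^\star\mathbf h_k,\qquad \mathbf R_0^{\mathrm{opt,I}}=\mathbf R_0^\star+\sum_{k\in\mathcal K}\mathbf W_k^\star-\sum_{k\in\mathcal K}\mathbf w_k^{\mathrm{opt,I}}(\mathbf w_k^{\mathrm{opt,I}})^H .$$ Then these are well defined, $\mathbf R_0^{\mathrm{opt,I}}\succeq\mathbf 0$, and $(\{\mathbf w_k^{\mathrm{opt,I}}\},\mathbf R_0^{\mathrm{opt,I}},u^\star)$ is an optimal solution of problem (P3.2). In particular (P3.2) and (SDR3.3) have the same optimal value.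
   Context: Let $M,N,K\ge1$ be integers and $\mathcal K=\{1,\dots,K\}$. Fixed data: $\mathbf G\in\mathbb C^{N\times M}$, $\mathbf h_{\mathrm d,k}\in\mathbb C^{M}$, $\mathbf h_{\mathrm r,k}\in\mathbb C^{N}$ ($k\in\mathcal K$), thresholds $\Gamma_k>0$, noise powers $\sigma_k^2>0$, power budget $P_0>0$, an angle $\theta$, spacing $d>0$ and wavelength $\lambda>0$. A reflection matrix is $\mathbf\Phi=\mathrm{diag}(\mathbf v)$, $\mathbf v\in\mathbb C^N$, $|v_n|=1$. For given $\mathbf\Phi$: $\mathbf h_k=\mathbf h_{\mathrm d,k}+\mathbf G^H\mathbf\Phi^H\mathbf h_{\mathrm r,k}$, $\mathbf H_k=\mathbf h_k\mathbf h_k^H$. Let $\mathbf a(\theta)\in\mathbb C^N$ have entries $e^{j2\pi (n-1)d\sin\theta/\lambda}$, $n=1,\dots,N$, and $\dot{\mathbf a}(\theta)$ its derivative in $\theta$; put $\mathbf b=\mathbf G^T\mathbf\Phi^T\mathbf a(\theta)$, $\dot{\mathbf b}=\mathbf G^T\mathbf\Phi^T\dot{\mathbf a}(\theta)$, $\mathbf B=\mathbf b\mathbf b^T$, $\dot{\mathbf B}=\dot{\mathbf b}\mathbf b^T+\mathbf b\dot{\mathbf b}^T$. For Hermitian $\mathbf R$ and $u\in\mathbb R$ let $$\mathcal M(\mathbf R,u)=\begin{bmatrix}\mathrm{tr}(\dot{\mathbf B}\mathbf R\dot{\mathbf B}^H)-u & \mathrm{tr}(\mathbf B\mathbf R\dot{\mathbf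 B}^H)\\ \mathrm{tr}(\dot{\mathbf B}\mathbf R\mathbf B^H) & \mathrm{tr}(\mathbf B\mathbf R\mathbf B^H)\end{bmatrix}$$ (when $\mathrm{tr}(\mathbf B\mathbf R\mathbf B^H)>0$, $\mathcal M(\mathbf R,u)\succeq\mathbf 0$ iff $u\le \mathrm{tr}(\dot{\mathbf B}\mathbf R\dot{\mathbf B}^H)-|\mathrm{tr}(\mathbf B\mathbf R\dot{\mathbf B}^H)|^2/\mathrm{tr}(\mathbf B\mathbf R\mathbf B^H)$, the quantity inversely proportional to the DoA CRB). Type-I SINR: $\gamma_k^{\mathrm I}=|\mathbf h_k^H\mathbf w_k|^2/(\sum_{i\ne k}|\mathbf h_k^H\mathbf w_i|^2+\mathbf h_k^H\mathbf R_0\mathbf h_k+\sigma_k^2)$. Problem (P3.2) (fixed $\mathbf\Phi$): maximize $u$ over $\mathbf w_k\in\mathbb C^M$, Hermitian $\mathbf R_0\succeq\mathbf 0$, $u\in\mathbb R$, subject to $\mathcal M(\sum_k\mathbf w_k\mathbf w_k^H+\mathbf R_0,u)\succeq\mathbf 0$, $\gamma_k^{\mathrm I}\ge\Gamma_k$ for all $k$, and $\sum_k\|\mathbf w_k\|^2+\mathrm{tr}(\mathbf R_0)\le P_0$. Problem (SDR3.3) (fixed $\mathbf\Phi$): maximize $u$ over Hermitian $\mathbf W_k\succeq\mathbf 0$, $\mathbf R_0\succeq\mathbf 0$, $u\in\mathbb R$, subject to $\mathcal M(\sum_k\mathbf W_k+\mathbf R_0,u)\succeq\mathbf 0$, $(1+\tfrac1{\Gamma_k})\mathrm{tr}(\mathbf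 H_k\mathbf W_k)-\mathrm{tr}(\mathbf H_k(\sum_i\mathbf W_i+\mathbf R_0))\ge\sigma_k^2$ for all $k$, and $\sum_k\mathrm{tr}(\mathbf W_k)+\mathrm{tr}(\mathbf R_0)\le P_0$. *)

theory Defs
  imports "Jordan_Normal_Form.Schur_Decomposition"
begin

(* Complex matrices/vectors are Jordan_Normal_Form matrices/vectors with
   0-based natural-number indices.  Users k \<in> K are indexed by k < K. *)

definition ctrace :: "complex mat \<Rightarrow> complex" where
  "ctrace A = (\<Sum>i<dim_row A. A $$ (i, i))"

definition hermitian_mat :: "nat \<Rightarrow> complex mat \<Rightarrow> bool" where
  "hermitian_mat n A \<longleftrightarrow> A \<in> carrier_mat n n \<and> mat_adjoint A = A"

definition psd_mat :: "nat \<Rightarrow> complex mat \<Rightarrow> bool" where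
  "psd_mat n A \<longleftrightarrow> hermitian_mat n A \<and>
     (\<forall>x \<in> carrier_vec n. Re (conjugate x \<bullet> (A *\<^sub>v x)) \<ge> 0)"

definition outer :: "complex vec \<Rightarrow> complex vec \<Rightarrow> complex mat" where
  "outer x y = mat (dim_vec x) (dim_vec y) (\<lambda>(i, j). x $ i * y $ j)"

definition msum :: "nat \<Rightarrow> nat \<Rightarrow> (nat \<Rightarrow> complex mat) \<Rightarrow> complex mat" where
  "msum n K F = mat n n (\<lambda>(i, j). \<Sum>k<K. F k $$ (i, j))"

definition sqnorm :: "complex vec \<Rightarrow> real" where
  "sqnorm x = (\<Sum>i<dim_vec x. (cmod (x $ i))\<^sup>2)"

definition Phi :: "complex vec \<Rightarrow> complex mat" where
  "Phi v = mat (dim_vec v) (dim_vec v) (\<lambda>(i, j). if i = j then v $ i else 0)"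

definition heff :: "complex mat \<Rightarrow> (nat \<Rightarrow> complex vec) \<Rightarrow> (nat \<Rightarrow> complex vec)
    \<Rightarrow> complex vec \<Rightarrow> nat \<Rightarrow> complex vec" where
  "heff G hD hR v k = hD k + mat_adjoint G *\<^sub>v (mat_adjoint (Phi v) *\<^sub>v hR k)"

definition Hmat :: "complex vec \<Rightarrow> complex mat" where
  "Hmat h = outer h (conjugate h)"

(* steering vector a(theta), entries exp(j 2 pi (n-1) d sin theta / lambda), n = 1..N
   (here 0-based index n = 0..N-1) *)
definition steer :: "nat \<Rightarrow> real \<Rightarrow> real \<Rightarrow> real \<Rightarrow> complex vec" where
  "steer N d lam \<theta> = vec N (\<lambda>n. exp (\<i> * of_real (2 * pi * real n * d * sin \<theta> / lam)))"

definition steer_dot :: "nat \<Rightarrow> real \<Rightarrow> real \<Rightarrow> real \<Rightarrow> complex vec" where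
  "steer_dot N d lam \<theta> = vec N (\<lambda>n. \<i> * of_real (2 * pi * real n * d * cos \<theta> / lam)
       * exp (\<i> * of_real (2 * pi * real n * d * sin \<theta> / lam)))"

definition bvec :: "complex mat \<Rightarrow> complex vec \<Rightarrow> real \<Rightarrow> real \<Rightarrow> real \<Rightarrow> complex vec" where
  "bvec G v d lam \<theta> = transpose_mat G *\<^sub>v (transpose_mat (Phi v) *\<^sub>v steer (dim_vec v) d lam \<theta>)"

definition bdot :: "complex mat \<Rightarrow> complex vec \<Rightarrow> real \<Rightarrow> real \<Rightarrow> real \<Rightarrow> complex vec" where
  "bdot G v d lam \<theta> = transpose_mat G *\<^sub>v (transpose_mat (Phi v) *\<^sub>v steer_dot (dim_vec v) d lam \<theta>)"

definition Bmat :: "complex mat \<Rightarrow> complex vec \<Rightarrow> real \<Rightarrow> real \<Rightarrow> real \<Rightarrow> complex mat" where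
  "Bmat G v d lam \<theta> = outer (bvec G v d lam \<theta>) (bvec G v d lam \<theta>)"

definition Bdot :: "complex mat \<Rightarrow> complex vec \<Rightarrow> real \<Rightarrow> real \<Rightarrow> real \<Rightarrow> complex mat" where
  "Bdot G v d lam \<theta> = outer (bdot G v d lam \<theta>) (bvec G v d lam \<theta>)
                      + outer (bvec G v d lam \<theta>) (bdot G v d lam \<theta>)"

definition CRBmat :: "complex mat \<Rightarrow> complex vec \<Rightarrow> real \<Rightarrow> real \<Rightarrow> real
    \<Rightarrow> complex mat \<Rightarrow> real \<Rightarrow> complex mat" where
  "CRBmat G v d lam \<theta> R u =
    (let B = Bmat G v d lam \<theta>; Bd = Bdot G v d lam \<theta> in
     mat 2 2 (\<lambda>(i, j).
       if i = 0 \<and> j = 0 then ctrace (Bd * R * mat_adjoint Bd) - of_real u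
       else if i = 0 \<and> j = 1 then ctrace (B * R * mat_adjoint Bd)
       else if i = 1 \<and> j = 0 then ctrace (Bd * R * mat_adjoint B)
       else ctrace (B * R * mat_adjoint B)))"

definition sinrI :: "nat \<Rightarrow> complex vec \<Rightarrow> (nat \<Rightarrow> complex vec) \<Rightarrow> complex mat \<Rightarrow> real
    \<Rightarrow> nat \<Rightarrow> real" where
  "sinrI K h w R0 s2 k =
     (cmod (conjugate h \<bullet> w k))\<^sup>2 /
     ((\<Sum>i\<in>{..<K} - {k}. (cmod (conjugate h \<bullet> w i))\<^sup>2) + Re (conjugate h \<bullet> (R0 *\<^sub>v h)) + s2)"

definition feas_P32 :: "nat \<Rightarrow> nat \<Rightarrow> complex mat \<Rightarrow> (nat \<Rightarrow> complex vec) \<Rightarrow> (nat \<Rightarrow> complex vec)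
    \<Rightarrow> (nat \<Rightarrow> real) \<Rightarrow> (nat \<Rightarrow> real) \<Rightarrow> real \<Rightarrow> real \<Rightarrow> real \<Rightarrow> real \<Rightarrow> complex vec
    \<Rightarrow> (nat \<Rightarrow> complex vec) \<Rightarrow> complex mat \<Rightarrow> real \<Rightarrow> bool" where
  "feas_P32 M K G hD hR Gam s2 P0 \<theta> d lam v w R0 u \<longleftrightarrow>
     (\<forall>k<K. w k \<in> carrier_vec M) \<and> psd_mat M R0 \<and>
     psd_mat 2 (CRBmat G v d lam \<theta> (msum M K (\<lambda>k. outer (w k) (conjugate (w k))) + R0) u) \<and>
     (\<forall>k<K. sinrI K (heff G hD hR v k) w R0 (s2 k) k \<ge> Gam k) \<and>
     (\<Sum>k<K. sqnorm (w k)) + Re (ctrace R0) \<le> P0"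

definition opt_P32 :: "nat \<Rightarrow> nat \<Rightarrow> complex mat \<Rightarrow> (nat \<Rightarrow> complex vec) \<Rightarrow> (nat \<Rightarrow> complex vec)
    \<Rightarrow> (nat \<Rightarrow> real) \<Rightarrow> (nat \<Rightarrow> real) \<Rightarrow> real \<Rightarrow> real \<Rightarrow> real \<Rightarrow> real \<Rightarrow> complex vec
    \<Rightarrow> (nat \<Rightarrow> complex vec) \<Rightarrow> complex mat \<Rightarrow> real \<Rightarrow> bool" where
  "opt_P32 M K G hD hR Gam s2 P0 \<theta> d lam v w R0 u \<longleftrightarrow>
     feas_P32 M K G hD hR Gam s2 P0 \<theta> d lam v w R0 u \<and>
     (\<forall>w' R0' u'. feas_P32 M K G hD hR Gam s2 P0 \<theta> d lam v w' R0' u' \<longrightarrow> u' \<le> u)"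

definition feas_SDR33 :: "nat \<Rightarrow> nat \<Rightarrow> complex mat \<Rightarrow> (nat \<Rightarrow> complex vec) \<Rightarrow> (nat \<Rightarrow> complex vec)
    \<Rightarrow> (nat \<Rightarrow> real) \<Rightarrow> (nat \<Rightarrow> real) \<Rightarrow> real \<Rightarrow> real \<Rightarrow> real \<Rightarrow> real \<Rightarrow> complex vec
    \<Rightarrow> (nat \<Rightarrow> complex mat) \<Rightarrow> complex mat \<Rightarrow> real \<Rightarrow> bool" where
  "feas_SDR33 M K G hD hR Gam s2 P0 \<theta> d lam v W R0 u \<longleftrightarrow>
     (\<forall>k<K. psd_mat M (W k)) \<and> psd_mat M R0 \<and>
     psd_mat 2 (CRBmat G v d lam \<theta> (msum M K W + R0) u) \<and>
     (\<forall>k<K. let H = Hmat (heff G hD hR v k) in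
        (1 + 1 / Gam k) * Re (ctrace (H * W k)) - Re (ctrace (H * (msum M K W + R0))) \<ge> s2 k) \<and>
     (\<Sum>k<K. Re (ctrace (W k))) + Re (ctrace R0) \<le> P0"

definition opt_SDR33 :: "nat \<Rightarrow> nat \<Rightarrow> complex mat \<Rightarrow> (nat \<Rightarrow> complex vec) \<Rightarrow> (nat \<Rightarrow> complex vec)
    \<Rightarrow> (nat \<Rightarrow> real) \<Rightarrow> (nat \<Rightarrow> real) \<Rightarrow> real \<Rightarrow> real \<Rightarrow> real \<Rightarrow> real \<Rightarrow> complex vec
    \<Rightarrow> (nat \<Rightarrow> complex mat) \<Rightarrow> complex mat \<Rightarrow> real \<Rightarrow> bool" where
  "opt_SDR33 M K G hD hR Gam s2 P0 \<theta> d lam v W R0 u \<longleftrightarrow>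
     feas_SDR33 M K G hD hR Gam s2 P0 \<theta> d lam v W R0 u \<and>
     (\<forall>W' R0' u'. feas_SDR33 M K G hD hR Gam s2 P0 \<theta> d lam v W' R0' u' \<longrightarrow> u' \<le> u)"

definition quadW :: "complex vec \<Rightarrow> complex mat \<Rightarrow> complex" where
  "quadW h Wk = conjugate h \<bullet> (Wk *\<^sub>v h)"

(* w_k^{opt,I} = (h_k^H W_k h_k)^{-1/2} W_k h_k  (the scalar is real positive when well defined) *)
definition w_optI :: "complex vec \<Rightarrow> complex mat \<Rightarrow> complex vec" where
  "w_optI h Wk = complex_of_real (1 / sqrt (Re (quadW h Wk))) \<cdot>\<^sub>v (Wk *\<^sub>v h)"

end

theory Submission
  imports Defs
begin


lemma bf_expand:
  assumes "A \<in> carrier_mat n n" "x \<in> carrier_vec n" "y \<in> carrier_vec n"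
  shows "conjugate x \<bullet> (A *\<^sub>v y) = (\<Sum>i<n. \<Sum>j<n. cnj (x$i) * A$$(i,j) * y$j)"
  using assms
  by (auto simp: scalar_prod_def row_def sum_distrib_left lessThan_atLeast0 mult.assoc intro!: sum.cong)

lemma adj_index:
  assumes "A \<in> carrier_mat n n" "i < n" "j < n"
  shows "mat_adjoint A $$ (i,j) = cnj (A $$ (j,i))"
  using assms unfolding mat_adjoint_def by (auto simp: mat_of_rows_def)

lemma adj_carrier: "A \<in> carrier_mat n n \<Longrightarrow> mat_adjoint A \<in> carrier_mat n n"
  unfolding mat_adjoint_def by auto

lemma herm_iff:
  "hermitian_mat n A \<longleftrightarrow> A \<in> carrier_mat n n \<and> (\<forall>i<n. \<forall>j<n. A$$(i,j) = cnj (A$$(j,i)))"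
proof
  assume h: "hermitian_mat n A"
  then have c: "A \<in> carrier_mat n n" by (simp add: hermitian_mat_def)
  have e: "mat_adjoint A = A" using h by (simp add: hermitian_mat_def)
  have "A$$(i,j) = cnj (A$$(j,i))" if "i < n" "j < n" for i j
  proof -
    have "A$$(i,j) = mat_adjoint A $$ (i,j)" using e by simp
    also have "\<dots> = cnj (A$$(j,i))" using adj_index[OF c that] .
    finally show ?thesis .
  qed
  then show "A \<in> carrier_mat n n \<and> (\<forall>i<n. \<forall>j<n. A$$(i,j) = cnj (A$$(j,i)))"
    using c by blast
next
  assume h: "A \<in> carrier_mat n n \<and> (\<forall>i<n. \<forall>j<n. A$$(i,j) = cnj (A$$(j,i)))"
  then have c: "A \<in> carrier_mat n n" by simp
  have ac: "mat_adjoint A \<in> carrier_mat n n" by (rule adj_carrier[OF c])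
  have "mat_adjoint A = A"
  proof (rule eq_matI)
    fix i j assume i: "i < dim_row A" and j: "j < dim_col A"
    have i': "i < n" and j': "j < n" using i j c by auto
    have "mat_adjoint A $$ (i,j) = cnj (A $$ (j,i))" by (rule adj_index[OF c i' j'])
    also have "\<dots> = A $$ (i,j)"
    proof -
      have "A $$ (j,i) = cnj (A $$ (i,j))" using h i' j' by blast
      then show ?thesis by simp
    qed
    finally show "mat_adjoint A $$ (i,j) = A $$ (i,j)" .
  next
    show "dim_row (mat_adjoint A) = dim_row A" using ac c by simp
    show "dim_col (mat_adjoint A) = dim_col A" using ac c by simp
  qed
  then show "hermitian_mat n A" using c by (simp add: hermitian_mat_def)
qed



lemma msum_carrier[simp]: "msum n K F \<in> carrier_mat n n"
  by (simp add: msum_def)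
lemma msum_index[simp]: "i < n \<Longrightarrow> j < n \<Longrightarrow> msum n K F $$ (i,j) = (\<Sum>k<K. F k $$ (i,j))"
  by (simp add: msum_def)

lemma msum_dims[simp]: "dim_row (msum n K F) = n" "dim_col (msum n K F) = n"
  by (simp_all add: msum_def)

lemma outer_carrier[simp]: "w \<in> carrier_vec n \<Longrightarrow> outer w (conjugate w) \<in> carrier_mat n n"
  by (simp add: outer_def)
lemma outer_index[simp]: "w \<in> carrier_vec n \<Longrightarrow> i < n \<Longrightarrow> j < n \<Longrightarrow>
   outer w (conjugate w) $$ (i,j) = w$i * cnj (w$j)"
  by (simp add: outer_def)

lemma bf_add:
  fixes A B :: "complex mat"
  assumes "A \<in> carrier_mat n n" "B \<in> carrier_mat n n" "x \<in> carrier_vec n" "y \<in> carrier_vec n"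
  shows "conjugate x \<bullet> ((A + B) *\<^sub>v y) = conjugate x \<bullet> (A *\<^sub>v y) + conjugate x \<bullet> (B *\<^sub>v y)"
proof -
  have c: "A + B \<in> carrier_mat n n" using assms by simp
  show ?thesis
    apply (subst bf_expand[OF c assms(3,4)])
    apply (subst bf_expand[OF assms(1,3,4)])
    apply (subst bf_expand[OF assms(2,3,4)])
    using assms by (simp add: algebra_simps sum.distrib)
qed

lemma bf_minus:
  fixes A B :: "complex mat"
  assumes "A \<in> carrier_mat n n" "B \<in> carrier_mat n n" "x \<in> carrier_vec n" "y \<in> carrier_vec n"
  shows "conjugate x \<bullet> ((A - B) *\<^sub>v y) = conjugate x \<bullet> (A *\<^sub>v y) - conjugate x \<bullet> (B *\<^sub>v y)"
proof -
  have c: "A - B \<in> carrier_mat n n" using assms by (simp add: minus_carrier_mat)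
  show ?thesis
    apply (subst bf_expand[OF c assms(3,4)])
    apply (subst bf_expand[OF assms(1,3,4)])
    apply (subst bf_expand[OF assms(2,3,4)])
    using assms by (simp add: algebra_simps sum_subtractf)
qed

lemma bf_msum:
  assumes "\<forall>k<K. F k \<in> carrier_mat n n" "x \<in> carrier_vec n" "y \<in> carrier_vec n"
  shows "conjugate x \<bullet> (msum n K F *\<^sub>v y) = (\<Sum>k<K. conjugate x \<bullet> (F k *\<^sub>v y))"
proof -
  have "conjugate x \<bullet> (msum n K F *\<^sub>v y) = (\<Sum>i<n. \<Sum>j<n. \<Sum>k<K. cnj (x$i) * F k $$(i,j) * y$j)"
    apply (subst bf_expand[OF msum_carrier assms(2,3)])
    by (simp add: sum_distrib_left sum_distrib_right)
  also have "\<dots> = (\<Sum>k<K. \<Sum>i<n. \<Sum>j<n. cnj (x$i) * F k $$(i,j) * y$j)"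
    by (simp add: sum.swap[of _ "{..<K}"])
  also have "\<dots> = (\<Sum>k<K. conjugate x \<bullet> (F k *\<^sub>v y))"
    using assms(1) by (auto intro!: sum.cong simp: bf_expand[OF _ assms(2,3)])
  finally show ?thesis .
qed

lemma sprod_conj: "x \<in> carrier_vec n \<Longrightarrow> w \<in> carrier_vec n \<Longrightarrow>
   conjugate x \<bullet> w = (\<Sum>i<n. cnj (x$i) * w$i)"
  by (simp add: scalar_prod_def lessThan_atLeast0)

lemma bf_outer:
  assumes "w \<in> carrier_vec n" "x \<in> carrier_vec n" "y \<in> carrier_vec n"
  shows "conjugate x \<bullet> (outer w (conjugate w) *\<^sub>v y) = (conjugate x \<bullet> w) * cnj (conjugate y \<bullet> w)"
proof -
  have "conjugate x \<bullet> (outer w (conjugate w) *\<^sub>v y) = (\<Sum>i<n. \<Sum>j<n. (cnj (x$i) * w$i) * (y$j * cnj (w$j)))"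
    apply (subst bf_expand[OF outer_carrier[OF assms(1)] assms(2,3)])
    apply (intro sum.cong refl)
    using assms by (simp add: mult.commute mult.left_commute)
  also have "\<dots> = (\<Sum>i<n. cnj (x$i) * w$i) * (\<Sum>j<n. y$j * cnj (w$j))"
    by (simp add: sum_product)
  also have "\<dots> = (conjugate x \<bullet> w) * cnj (conjugate y \<bullet> w)"
    using assms by (simp add: sprod_conj)
  finally show ?thesis .
qed



lemma qf_outer:
  assumes "w \<in> carrier_vec n" "x \<in> carrier_vec n"
  shows "conjugate x \<bullet> (outer w (conjugate w) *\<^sub>v x) = complex_of_real ((cmod (conjugate x \<bullet> w))\<^sup>2)"
  by (subst bf_outer[OF assms assms(2)]) (rule complex_norm_square[symmetric])

lemma bf_herm:
  assumes "hermitian_mat n A" "x \<in> carrier_vec n" "y \<in> carrier_vec n"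
  shows "cnj (conjugate x \<bullet> (A *\<^sub>v y)) = conjugate y \<bullet> (A *\<^sub>v x)"
proof -
  have c: "A \<in> carrier_mat n n" and h: "\<forall>i<n. \<forall>j<n. A$$(i,j) = cnj (A$$(j,i))"
    using assms(1) unfolding herm_iff by blast+
  have h': "cnj (A$$(i,j)) = A$$(j,i)" if "i < n" "j < n" for i j
  proof -
    have "A$$(i,j) = cnj (A$$(j,i))" using h that by blast
    then show ?thesis by simp
  qed
  have "cnj (conjugate x \<bullet> (A *\<^sub>v y)) = (\<Sum>i<n. \<Sum>j<n. x$i * cnj (A$$(i,j)) * cnj (y$j))"
    by (simp add: bf_expand[OF c assms(2,3)])
  also have "\<dots> = (\<Sum>i<n. \<Sum>j<n. x$i * A$$(j,i) * cnj (y$j))"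
    by (intro sum.cong refl) (simp add: h')
  also have "\<dots> = (\<Sum>j<n. \<Sum>i<n. cnj (y$j) * A$$(j,i) * x$i)"
    by (subst sum.swap) (intro sum.cong refl, simp add: ac_simps)
  also have "\<dots> = conjugate y \<bullet> (A *\<^sub>v x)"
    by (simp add: bf_expand[OF c assms(3,2)])
  finally show ?thesis .
qed

lemma qf_real:
  assumes "hermitian_mat n A" "x \<in> carrier_vec n"
  shows "conjugate x \<bullet> (A *\<^sub>v x) = complex_of_real (Re (conjugate x \<bullet> (A *\<^sub>v x)))"
proof -
  have e: "cnj (conjugate x \<bullet> (A *\<^sub>v x)) = conjugate x \<bullet> (A *\<^sub>v x)" using bf_herm[OF assms assms(2)] .
  show ?thesis using e by (simp add: complex_eq_iff)
qed

lemma ctrace_add: "A \<in> carrier_mat n n \<Longrightarrow> B \<in> carrier_mat n n \<Longrightarrow> ctrace (A + B) = ctrace A + ctrace B"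
  by (simp add: ctrace_def sum.distrib)
lemma ctrace_minus: "A \<in> carrier_mat n n \<Longrightarrow> B \<in> carrier_mat n n \<Longrightarrow> ctrace (A - B) = ctrace A - ctrace B"
  by (simp add: ctrace_def sum_subtractf)
lemma ctrace_msum:
  assumes "\<forall>k<K. F k \<in> carrier_mat n n"
  shows "ctrace (msum n K F) = (\<Sum>k<K. ctrace (F k))"
proof -
  have "ctrace (msum n K F) = (\<Sum>i<n. \<Sum>k<K. F k $$ (i,i))" by (simp add: ctrace_def msum_def)
  also have "\<dots> = (\<Sum>k<K. \<Sum>i<n. F k $$ (i,i))" by (rule sum.swap)
  also have "\<dots> = (\<Sum>k<K. ctrace (F k))" using assms by (auto simp: ctrace_def intro!: sum.cong)
  finally show ?thesis .
qed

lemma ctrace_outer: "ctrace (outer w (conjugate w)) = complex_of_real (sqnorm w)"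
  by (simp add: ctrace_def sqnorm_def complex_norm_square outer_def del: of_real_power)
lemma ctrace_H:
  assumes "h \<in> carrier_vec n" "A \<in> carrier_mat n n"
  shows "ctrace (Hmat h * A) = conjugate h \<bullet> (A *\<^sub>v h)"
proof -
  have "ctrace (Hmat h * A) = (\<Sum>i<n. \<Sum>j<n. h$i * cnj (h$j) * A$$(j,i))"
    using assms by (simp add: ctrace_def Hmat_def outer_def scalar_prod_def row_def col_def lessThan_atLeast0)
  also have "\<dots> = (\<Sum>j<n. \<Sum>i<n. cnj (h$j) * A$$(j,i) * h$i)"
    by (subst sum.swap) (simp add: algebra_simps)
  also have "\<dots> = conjugate h \<bullet> (A *\<^sub>v h)" using assms by (simp add: bf_expand)
  finally show ?thesis .
qed



lemma bf_shift:
  fixes W :: "complex mat"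
  assumes "W \<in> carrier_mat n n" "x \<in> carrier_vec n" "h \<in> carrier_vec n"
  shows "conjugate (x - t \<cdot>\<^sub>v h) \<bullet> (W *\<^sub>v (x - t \<cdot>\<^sub>v h)) =
    conjugate x \<bullet> (W *\<^sub>v x) - t * (conjugate x \<bullet> (W *\<^sub>v h)) - cnj t * (conjugate h \<bullet> (W *\<^sub>v x))
    + (t * cnj t) * (conjugate h \<bullet> (W *\<^sub>v h))"
proof -
  have c: "x - t \<cdot>\<^sub>v h \<in> carrier_vec n" using assms by simp
  have "conjugate (x - t \<cdot>\<^sub>v h) \<bullet> (W *\<^sub>v (x - t \<cdot>\<^sub>v h)) =
     (\<Sum>i<n. \<Sum>j<n. cnj (x$i) * W$$(i,j) * x$j - t * (cnj (x$i) * W$$(i,j) * h$j)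
        - cnj t * (cnj (h$i) * W$$(i,j) * x$j) + t * cnj t * (cnj (h$i) * W$$(i,j) * h$j))"
    apply (subst bf_expand[OF assms(1) c c])
    apply (intro sum.cong refl)
    using assms by (simp add: algebra_simps)
  also have "\<dots> = conjugate x \<bullet> (W *\<^sub>v x) - t * (conjugate x \<bullet> (W *\<^sub>v h)) - cnj t * (conjugate h \<bullet> (W *\<^sub>v x))
    + (t * cnj t) * (conjugate h \<bullet> (W *\<^sub>v h))"
    using assms by (simp only: bf_expand sum.distrib sum_subtractf sum_distrib_left)
  finally show ?thesis .
qed

lemma cs_psd:
  assumes p: "psd_mat n W" and h: "h \<in> carrier_vec n" and x: "x \<in> carrier_vec n"
    and a: "Re (conjugate h \<bullet> (W *\<^sub>v h)) > 0"
  shows "(cmod (conjugate x \<bullet> (W *\<^sub>v h)))\<^sup>2 / Re (conjugate h \<bullet> (W *\<^sub>v h)) \<le> Re (conjugate x \<bullet> (W *\<^sub>v x))"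
proof -
  have herm: "hermitian_mat n W" and c: "W \<in> carrier_mat n n"
    using p by (auto simp: psd_mat_def hermitian_mat_def)
  define a where "a = Re (conjugate h \<bullet> (W *\<^sub>v h))"
  define B where "B = conjugate h \<bullet> (W *\<^sub>v x)"
  define t where "t = B / complex_of_real a"
  have Qh: "conjugate h \<bullet> (W *\<^sub>v h) = complex_of_real a" unfolding a_def using qf_real[OF herm h] .
  have Bxh: "conjugate x \<bullet> (W *\<^sub>v h) = cnj B" unfolding B_def using bf_herm[OF herm h x] by simp
  have ap: "a > 0" using a a_def by simp
  have y: "x - t \<cdot>\<^sub>v h \<in> carrier_vec n" using x h by simp
  have "0 \<le> Re (conjugate (x - t \<cdot>\<^sub>v h) \<bullet> (W *\<^sub>v (x - t \<cdot>\<^sub>v h)))"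
    using p y by (auto simp: psd_mat_def)
  also have "conjugate (x - t \<cdot>\<^sub>v h) \<bullet> (W *\<^sub>v (x - t \<cdot>\<^sub>v h)) =
      conjugate x \<bullet> (W *\<^sub>v x) - complex_of_real ((cmod B)\<^sup>2 / a)"
  proof -
    have e: "B * cnj B = complex_of_real ((cmod B)\<^sup>2)" by (rule complex_norm_square[symmetric])
    have "t * cnj B = complex_of_real ((cmod B)\<^sup>2 / a)" "cnj t * B = complex_of_real ((cmod B)\<^sup>2 / a)"
      "t * cnj t * complex_of_real a = complex_of_real ((cmod B)\<^sup>2 / a)"
      using e ap unfolding t_def by (auto simp: field_simps power2_eq_square)
    then show ?thesis
      using bf_shift[OF c x h, of t] Qh Bxh B_def by simp
  qed
  finally have "(cmod B)\<^sup>2 / a \<le> Re (conjugate x \<bullet> (W *\<^sub>v x))" by simp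
  then show ?thesis using Bxh a_def by simp
qed



lemma adj_carrier2: "mat_adjoint A \<in> carrier_mat (dim_col A) (dim_row A)"
  unfolding mat_adjoint_def by auto

lemma heff_carrier:
  assumes "G \<in> carrier_mat N M" "hD k \<in> carrier_vec M" "hR k \<in> carrier_vec N" "v \<in> carrier_vec N"
  shows "heff G hD hR v k \<in> carrier_vec M"
proof -
  have "mat_adjoint G \<in> carrier_mat M N" using adj_carrier2[of G] assms(1) by auto
  moreover have "mat_adjoint (Phi v) \<in> carrier_mat N N" using adj_carrier2[of "Phi v"] assms(4)
    by (auto simp: Phi_def)
  ultimately show ?thesis using assms unfolding heff_def by auto
qed

lemma psd_outer:
  assumes "w \<in> carrier_vec n"
  shows "psd_mat n (outer w (conjugate w))"
  unfolding psd_mat_def herm_iff using assms by (auto simp: qf_outer)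

lemma wopt_facts:
  assumes p: "psd_mat n Wk" and h: "h \<in> carrier_vec n"
    and a: "Re (conjugate h \<bullet> (Wk *\<^sub>v h)) > 0"
  shows "w_optI h Wk \<in> carrier_vec n"
    and "\<And>x. x \<in> carrier_vec n \<Longrightarrow> (cmod (conjugate x \<bullet> w_optI h Wk))\<^sup>2
           = (cmod (conjugate x \<bullet> (Wk *\<^sub>v h)))\<^sup>2 / Re (conjugate h \<bullet> (Wk *\<^sub>v h))"
    and "(cmod (conjugate h \<bullet> w_optI h Wk))\<^sup>2 = Re (conjugate h \<bullet> (Wk *\<^sub>v h))"
proof -
  have c: "Wk \<in> carrier_mat n n" and herm: "hermitian_mat n Wk"
    using p by (auto simp: psd_mat_def hermitian_mat_def)
  define a where "a = Re (conjugate h \<bullet> (Wk *\<^sub>v h))"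
  have ap: "a > 0" using a a_def by simp
  have wv: "Wk *\<^sub>v h \<in> carrier_vec n" using c h by simp
  show wc: "w_optI h Wk \<in> carrier_vec n" unfolding w_optI_def using wv by simp
  have gen: "(cmod (conjugate x \<bullet> w_optI h Wk))\<^sup>2 = (cmod (conjugate x \<bullet> (Wk *\<^sub>v h)))\<^sup>2 / a"
    if x: "x \<in> carrier_vec n" for x
  proof -
    have "conjugate x \<bullet> w_optI h Wk = complex_of_real (1 / sqrt a) * (conjugate x \<bullet> (Wk *\<^sub>v h))"
      unfolding w_optI_def quadW_def a_def[symmetric] using x wv c
      by (subst scalar_prod_smult_right) auto
    then have "(cmod (conjugate x \<bullet> w_optI h Wk))\<^sup>2 = (1 / sqrt a)\<^sup>2 * (cmod (conjugate x \<bullet> (Wk *\<^sub>v h)))\<^sup>2"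
      using ap by (simp add: norm_divide power_divide)
    also have "(1 / sqrt a)\<^sup>2 = 1 / a" using ap by (simp add: power_divide)
    finally show ?thesis by simp
  qed
  show "\<And>x. x \<in> carrier_vec n \<Longrightarrow> (cmod (conjugate x \<bullet> w_optI h Wk))\<^sup>2
           = (cmod (conjugate x \<bullet> (Wk *\<^sub>v h)))\<^sup>2 / Re (conjugate h \<bullet> (Wk *\<^sub>v h))"
    using gen a_def by simp
  have "conjugate h \<bullet> (Wk *\<^sub>v h) = complex_of_real a" using qf_real[OF herm h] a_def by simp
  then have "(cmod (conjugate h \<bullet> (Wk *\<^sub>v h)))\<^sup>2 = a\<^sup>2" using ap by simp
  then show "(cmod (conjugate h \<bullet> w_optI h Wk))\<^sup>2 = Re (conjugate h \<bullet> (Wk *\<^sub>v h))"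
    using gen[OF h] ap a_def by (simp add: power2_eq_square)
qed

lemma psd_diff:
  assumes p: "psd_mat n Wk" and h: "h \<in> carrier_vec n"
    and a: "Re (conjugate h \<bullet> (Wk *\<^sub>v h)) > 0" and x: "x \<in> carrier_vec n"
  shows "Re (conjugate x \<bullet> (Wk *\<^sub>v x)) - (cmod (conjugate x \<bullet> w_optI h Wk))\<^sup>2 \<ge> 0"
  using cs_psd[OF p h x a] wopt_facts(2)[OF p h a x] by simp

lemma ineq_P_to_S:
  fixes g s a Dm :: real
  assumes "g > 0" "s > 0" "Dm \<ge> 0" "a / (Dm + s) \<ge> g"
  shows "(1 + 1/g) * a - (a + Dm) \<ge> s"
proof -
  have "a \<ge> g * (Dm + s)" using assms by (simp add: pos_le_divide_eq mult.commute)
  then have "a / g \<ge> Dm + s" using assms by (simp add: pos_le_divide_eq mult.commute)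
  then show ?thesis by (simp add: algebra_simps)
qed

lemma ineq_S_to_P:
  fixes g s a Dm :: real
  assumes "g > 0" "s > 0" "Dm \<ge> 0" "(1 + 1/g) * a - (a + Dm) \<ge> s"
  shows "a / (Dm + s) \<ge> g" and "a > 0"
proof -
  have "a / g \<ge> Dm + s" using assms(4) by (simp add: algebra_simps)
  then have "a \<ge> g * (Dm + s)" using assms by (simp add: pos_le_divide_eq mult.commute)
  then show "a / (Dm + s) \<ge> g" using assms by (simp add: pos_le_divide_eq mult.commute)
  show "a > 0" using \<open>a \<ge> g * (Dm + s)\<close> assms by (smt (verit) mult_pos_pos)
qed



theorem proposition6:
  fixes M N K :: nat
    and G :: "complex mat" and hD hR :: "nat \<Rightarrow> complex vec"
    and Gam s2 :: "nat \<Rightarrow> real" and P0 \<theta> d lam :: real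
    and v :: "complex vec"
    and W :: "nat \<Rightarrow> complex mat" and R0 :: "complex mat" and u :: real
  assumes "M \<ge> 1" and "N \<ge> 1" and "K \<ge> 1"
    and "G \<in> carrier_mat N M"
    and "\<forall>k<K. hD k \<in> carrier_vec M \<and> hR k \<in> carrier_vec N"
    and "\<forall>k<K. Gam k > 0 \<and> s2 k > 0"
    and "P0 > 0" and "d > 0" and "lam > 0"
    and "v \<in> carrier_vec N" and "\<forall>n<N. cmod (v $ n) = 1"
    and "opt_SDR33 M K G hD hR Gam s2 P0 \<theta> d lam v W R0 u"
  shows "(\<forall>k<K. quadW (heff G hD hR v k) (W k) \<in> \<real> \<and> Re (quadW (heff G hD hR v k) (W k)) > 0)
     \<and> psd_mat M (R0 + msum M K W
          - msum M K (\<lambda>k. outer (w_optI (heff G hD hR v k) (W k))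
                                (conjugate (w_optI (heff G hD hR v k) (W k)))))
     \<and> opt_P32 M K G hD hR Gam s2 P0 \<theta> d lam v
          (\<lambda>k. w_optI (heff G hD hR v k) (W k))
          (R0 + msum M K W
          - msum M K (\<lambda>k. outer (w_optI (heff G hD hR v k) (W k))
                                (conjugate (w_optI (heff G hD hR v k) (W k))))) u
     \<and> Sup {u'. \<exists>w' R0'. feas_P32 M K G hD hR Gam s2 P0 \<theta> d lam v w' R0' u'} = u
     \<and> Sup {u'. \<exists>W' R0'. feas_SDR33 M K G hD hR Gam s2 P0 \<theta> d lam v W' R0' u'} = u"
proof -
  note assms' = assms
  define h where "h = heff G hD hR v"
  define wo where "wo = (\<lambda>k. w_optI (h k) (W k))"
  define Wc where "Wc = (\<lambda>k. outer (wo k) (conjugate (wo k)))"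
  define Rn where "Rn = R0 + msum M K W - msum M K Wc"
  define Q where "Q = (\<lambda>x A. Re (conjugate x \<bullet> (A *\<^sub>v x)))"
  have feas: "feas_SDR33 M K G hD hR Gam s2 P0 \<theta> d lam v W R0 u"
    using assms(12) unfolding opt_SDR33_def by (rule conjunct1)
  have opt: "\<And>W' R0' u'. feas_SDR33 M K G hD hR Gam s2 P0 \<theta> d lam v W' R0' u' \<Longrightarrow> u' \<le> u"
    using assms(12) unfolding opt_SDR33_def by blast
  note fs = feas[unfolded feas_SDR33_def Let_def]
  have psdW: "\<And>k. k < K \<Longrightarrow> psd_mat M (W k)" using conjunct1[OF fs] by blast
  have psdR: "psd_mat M R0" using fs by (elim conjE)
  have crb: "psd_mat 2 (CRBmat G v d lam \<theta> (msum M K W + R0) u)" using fs by (elim conjE)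
  have sinr: "\<And>k. k < K \<Longrightarrow> (1 + 1 / Gam k) * Re (ctrace (Hmat (h k) * W k))
        - Re (ctrace (Hmat (h k) * (msum M K W + R0))) \<ge> s2 k"
    using conjunct1[OF conjunct2[OF conjunct2[OF conjunct2[OF fs]]]] unfolding h_def by blast
  have pow: "(\<Sum>k<K. Re (ctrace (W k))) + Re (ctrace R0) \<le> P0" using fs by (elim conjE)
  have Wc_: "\<And>k. k < K \<Longrightarrow> W k \<in> carrier_mat M M" using psdW by (auto simp: psd_mat_def hermitian_mat_def)
  have R0c: "R0 \<in> carrier_mat M M" using psdR by (auto simp: psd_mat_def hermitian_mat_def)
  have hc: "\<And>k. k < K \<Longrightarrow> h k \<in> carrier_vec M"
    unfolding h_def using heff_carrier[OF assms(4) _ _ assms(10)] assms(5) by blast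
  have QnW: "\<And>k x. k < K \<Longrightarrow> x \<in> carrier_vec M \<Longrightarrow> Q x (W k) \<ge> 0"
    using psdW unfolding Q_def psd_mat_def by auto
  have QnR: "\<And>x. x \<in> carrier_vec M \<Longrightarrow> Q x R0 \<ge> 0"
    using psdR unfolding Q_def psd_mat_def by auto
  have QsumWR: "Q x (msum M K W + R0) = (\<Sum>i<K. Q x (W i)) + Q x R0" if x: "x \<in> carrier_vec M" for x
    unfolding Q_def using bf_add[OF msum_carrier R0c x x] bf_msum[of K W M x x] Wc_ x by simp
  have apos: "Q (h k) (W k) > 0" and
       sdrk: "(1 + 1 / Gam k) * Q (h k) (W k) - (Q (h k) (W k) + ((\<Sum>i\<in>{..<K}-{k}. Q (h k) (W i)) + Q (h k) R0)) \<ge> s2 k"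
    if k: "k < K" for k
  proof -
    have "(\<Sum>i<K. Q (h k) (W i)) = Q (h k) (W k) + (\<Sum>i\<in>{..<K}-{k}. Q (h k) (W i))"
      using k by (simp add: sum.remove)
    then show sd: "(1 + 1 / Gam k) * Q (h k) (W k) - (Q (h k) (W k) + ((\<Sum>i\<in>{..<K}-{k}. Q (h k) (W i)) + Q (h k) R0)) \<ge> s2 k"
      using sinr[OF k] ctrace_H[OF hc[OF k] Wc_[OF k]] ctrace_H[OF hc[OF k], of "msum M K W + R0"]
        QsumWR[OF hc[OF k]] R0c unfolding Q_def by simp
    have "(\<Sum>i\<in>{..<K}-{k}. Q (h k) (W i)) + Q (h k) R0 \<ge> 0"
      using QnW hc[OF k] QnR by (auto intro!: sum_nonneg add_nonneg_nonneg)
    then show "Q (h k) (W k) > 0" using ineq_S_to_P(2)[OF _ _ _ sd] assms(6) k by auto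
  qed
  have part1: "\<forall>k<K. quadW (heff G hD hR v k) (W k) \<in> \<real> \<and> Re (quadW (heff G hD hR v k) (W k)) > 0"
  proof (intro allI impI conjI)
    fix k assume k: "k < K"
    have "hermitian_mat M (W k)" using psdW[OF k] by (simp add: psd_mat_def)
    then show "quadW (heff G hD hR v k) (W k) \<in> \<real>"
      using qf_real[of M "W k" "h k"] hc[OF k] unfolding quadW_def h_def by (metis Reals_of_real)
    show "Re (quadW (heff G hD hR v k) (W k)) > 0" using apos[OF k] unfolding quadW_def Q_def h_def .
  qed
  have woc: "\<And>k. k < K \<Longrightarrow> wo k \<in> carrier_vec M"
    unfolding wo_def using wopt_facts(1) psdW hc apos unfolding Q_def by blast
  have Wcc: "\<And>k. k < K \<Longrightarrow> Wc k \<in> carrier_mat M M" unfolding Wc_def using woc by simp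
  have QWc: "Q x (Wc k) = (cmod (conjugate x \<bullet> wo k))\<^sup>2" if "k < K" "x \<in> carrier_vec M" for k x
    unfolding Q_def Wc_def qf_outer[OF woc[OF that(1)] that(2)] by simp
  have wok: "\<And>k. k < K \<Longrightarrow> (cmod (conjugate (h k) \<bullet> wo k))\<^sup>2 = Q (h k) (W k)"
    unfolding wo_def Q_def using wopt_facts(3) psdW hc apos unfolding Q_def by blast
  have Rnc: "Rn \<in> carrier_mat M M" unfolding Rn_def using R0c by (simp add: minus_carrier_mat)
  have QRn: "Q x Rn = Q x R0 + (\<Sum>i<K. Q x (W i)) - (\<Sum>i<K. Q x (Wc i))" if x: "x \<in> carrier_vec M" for x
  proof -
    have c1: "R0 + msum M K W \<in> carrier_mat M M" using R0c by simp
    show ?thesis unfolding Rn_def Q_def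
      using bf_minus[OF c1 msum_carrier x x] bf_add[OF R0c msum_carrier x x]
        bf_msum[of K W M x x] bf_msum[of K Wc M x x] Wc_ Wcc x by simp
  qed
  have psdRn: "psd_mat M Rn"
  proof -
    have herm: "hermitian_mat M Rn"
      unfolding herm_iff
    proof (intro conjI allI impI)
      show "Rn \<in> carrier_mat M M" by (rule Rnc)
      fix i j assume i: "i < M" and j: "j < M"
      have hR: "R0 $$ (i,j) = cnj (R0 $$ (j,i))" using psdR i j unfolding psd_mat_def herm_iff by blast
      have hW: "\<And>k. k < K \<Longrightarrow> W k $$ (i,j) = cnj (W k $$ (j,i))"
        using psdW i j unfolding psd_mat_def herm_iff by blast
      have hWc: "Wc k $$ (i,j) = cnj (Wc k $$ (j,i))" if k: "k < K" for k
        unfolding Wc_def using outer_index[OF woc[OF k] i j] outer_index[OF woc[OF k] j i] by simp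
      have "Rn $$ (i,j) = R0 $$ (i,j) + (\<Sum>k<K. W k $$ (i,j)) - (\<Sum>k<K. Wc k $$ (i,j))"
        unfolding Rn_def using carrier_matD[OF R0c] i j by simp
      also have "\<dots> = cnj (R0 $$ (j,i) + (\<Sum>k<K. W k $$ (j,i)) - (\<Sum>k<K. Wc k $$ (j,i)))"
      proof -
        have s1: "(\<Sum>k<K. W k $$ (i,j)) = (\<Sum>k<K. cnj (W k $$ (j,i)))"
          using hW by (auto intro!: sum.cong)
        have s2: "(\<Sum>k<K. Wc k $$ (i,j)) = (\<Sum>k<K. cnj (Wc k $$ (j,i)))"
          using hWc by (auto intro!: sum.cong)
        show ?thesis using hR s1 s2 by simp
      qed
      also have "R0 $$ (j,i) + (\<Sum>k<K. W k $$ (j,i)) - (\<Sum>k<K. Wc k $$ (j,i)) = Rn $$ (j,i)"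
        unfolding Rn_def using carrier_matD[OF R0c] i j by simp
      finally show "Rn $$ (i,j) = cnj (Rn $$ (j,i))" .
    qed
    have "Q x Rn \<ge> 0" if x: "x \<in> carrier_vec M" for x
    proof -
      have "Q x Rn = Q x R0 + (\<Sum>i<K. Q x (W i) - Q x (Wc i))" using QRn[OF x] by (simp add: sum_subtractf)
      moreover have "\<And>i. i < K \<Longrightarrow> Q x (W i) - Q x (Wc i) \<ge> 0"
        using psd_diff[OF psdW hc _ x] apos QWc[OF _ x] unfolding Q_def wo_def by auto
      ultimately have "(\<Sum>i<K. Q x (W i) - Q x (Wc i)) \<ge> 0" and e: "Q x Rn = Q x R0 + (\<Sum>i<K. Q x (W i) - Q x (Wc i))"
        by (auto intro!: sum_nonneg)
      then show ?thesis using QnR[OF x] by linarith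
    qed
    then show ?thesis using herm unfolding psd_mat_def Q_def by auto
  qed
  have eqm: "msum M K Wc + Rn = msum M K W + R0"
    unfolding Rn_def using carrier_matD[OF R0c] by (intro eq_matI) auto
  have feasP: "feas_P32 M K G hD hR Gam s2 P0 \<theta> d lam v wo Rn u"
    unfolding feas_P32_def
  proof (intro conjI allI impI)
    show "\<And>k. k < K \<Longrightarrow> wo k \<in> carrier_vec M" by (rule woc)
    show "psd_mat M Rn" by (rule psdRn)
    show "psd_mat 2 (CRBmat G v d lam \<theta> (msum M K (\<lambda>k. outer (wo k) (conjugate (wo k))) + Rn) u)"
      using crb eqm unfolding Wc_def by simp
  next
    fix k assume k: "k < K"
    define Dm where "Dm = (\<Sum>i\<in>{..<K}-{k}. Q (h k) (W i)) + Q (h k) R0"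
    have Dm0: "Dm \<ge> 0" unfolding Dm_def using QnW hc[OF k] QnR by (auto intro!: sum_nonneg add_nonneg_nonneg)
    have s1: "(\<Sum>i<K. Q (h k) (W i)) = Q (h k) (W k) + (\<Sum>i\<in>{..<K}-{k}. Q (h k) (W i))"
      using k by (simp add: sum.remove)
    have s2': "(\<Sum>i<K. Q (h k) (Wc i)) = Q (h k) (Wc k) + (\<Sum>i\<in>{..<K}-{k}. Q (h k) (Wc i))"
      using k by (simp add: sum.remove)
    have e3: "(\<Sum>i\<in>{..<K}-{k}. (cmod (conjugate (h k) \<bullet> wo i))\<^sup>2) = (\<Sum>i\<in>{..<K}-{k}. Q (h k) (Wc i))"
      using QWc hc[OF k] by (auto intro!: sum.cong)
    have den: "(\<Sum>i\<in>{..<K}-{k}. (cmod (conjugate (h k) \<bullet> wo i))\<^sup>2) + Q (h k) Rn + s2 k = Dm + s2 k"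
      unfolding Dm_def using QRn[OF hc[OF k]] s1 s2' e3 QWc[OF k hc[OF k]] wok[OF k] by simp
    have "Q (h k) (W k) / (Dm + s2 k) \<ge> Gam k"
      using ineq_S_to_P(1)[OF _ _ Dm0 sdrk[OF k, folded Dm_def]] assms(6) k by auto
    then show "sinrI K (heff G hD hR v k) wo Rn (s2 k) k \<ge> Gam k"
      unfolding sinrI_def using den wok[OF k] unfolding Q_def h_def by simp
  next
    have "(\<Sum>k<K. sqnorm (wo k)) + Re (ctrace Rn) = (\<Sum>k<K. Re (ctrace (W k))) + Re (ctrace R0)"
    proof -
      have "Re (ctrace Rn) = Re (ctrace R0) + (\<Sum>k<K. Re (ctrace (W k))) - (\<Sum>k<K. Re (ctrace (Wc k)))"
        unfolding Rn_def using R0c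
        using Wc_ Wcc by (simp add: ctrace_add[of _ M] ctrace_minus[of _ M] ctrace_msum minus_carrier_mat)
      moreover have "(\<Sum>k<K. Re (ctrace (Wc k))) = (\<Sum>k<K. sqnorm (wo k))"
        unfolding Wc_def using ctrace_outer woc by (auto intro!: sum.cong)
      ultimately show ?thesis by simp
    qed
    then show "(\<Sum>k<K. sqnorm (wo k)) + Re (ctrace Rn) \<le> P0" using pow by simp
  qed
  have boundP: "u' \<le> u" if f: "feas_P32 M K G hD hR Gam s2 P0 \<theta> d lam v w' R0' u'" for w' R0' u'
  proof -
    define W' where "W' = (\<lambda>k. outer (w' k) (conjugate (w' k)))"
    have w'c: "\<And>k. k < K \<Longrightarrow> w' k \<in> carrier_vec M" and psdR': "psd_mat M R0'"
      and crb': "psd_mat 2 (CRBmat G v d lam \<theta> (msum M K W' + R0') u')"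
      and sinr': "\<And>k. k < K \<Longrightarrow> sinrI K (h k) w' R0' (s2 k) k \<ge> Gam k"
      and pow': "(\<Sum>k<K. sqnorm (w' k)) + Re (ctrace R0') \<le> P0"
      using f unfolding feas_P32_def W'_def h_def by auto
    have R0'c: "R0' \<in> carrier_mat M M" using psdR' by (auto simp: psd_mat_def hermitian_mat_def)
    have W'c: "\<And>k. k < K \<Longrightarrow> W' k \<in> carrier_mat M M" unfolding W'_def using w'c by simp
    have QW': "Q x (W' k) = (cmod (conjugate x \<bullet> w' k))\<^sup>2" if "k < K" "x \<in> carrier_vec M" for k x
      unfolding Q_def W'_def qf_outer[OF w'c[OF that(1)] that(2)] by simp
    have "feas_SDR33 M K G hD hR Gam s2 P0 \<theta> d lam v W' R0' u'"
      unfolding feas_SDR33_def Let_def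
    proof (intro conjI allI impI)
      show "\<And>k. k < K \<Longrightarrow> psd_mat M (W' k)" unfolding W'_def using psd_outer w'c by blast
      show "psd_mat M R0'" by (rule psdR')
      show "psd_mat 2 (CRBmat G v d lam \<theta> (msum M K W' + R0') u')" by (rule crb')
    next
      fix k assume k: "k < K"
      define Dm where "Dm = (\<Sum>i\<in>{..<K}-{k}. Q (h k) (W' i)) + Q (h k) R0'"
      have Dm0: "Dm \<ge> 0" unfolding Dm_def using QW' hc[OF k] psdR' unfolding Q_def psd_mat_def
        by (auto intro!: sum_nonneg add_nonneg_nonneg)
      have s1: "(\<Sum>i<K. Q (h k) (W' i)) = Q (h k) (W' k) + (\<Sum>i\<in>{..<K}-{k}. Q (h k) (W' i))"
        using k by (simp add: sum.remove)
      have e3: "(\<Sum>i\<in>{..<K}-{k}. (cmod (conjugate (h k) \<bullet> w' i))\<^sup>2) = (\<Sum>i\<in>{..<K}-{k}. Q (h k) (W' i))"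
        using QW' hc[OF k] by (auto intro!: sum.cong)
      have "Q (h k) (W' k) / (Dm + s2 k) \<ge> Gam k"
        using sinr'[OF k] unfolding sinrI_def Dm_def using e3 QW'[OF k hc[OF k]] unfolding Q_def
        by simp
      then have ineq: "(1 + 1 / Gam k) * Q (h k) (W' k) - (Q (h k) (W' k) + Dm) \<ge> s2 k"
        using ineq_P_to_S[OF _ _ Dm0] assms(6) k by auto
      have QS: "Q (h k) (msum M K W' + R0') = (\<Sum>i<K. Q (h k) (W' i)) + Q (h k) R0'"
        unfolding Q_def using bf_add[OF msum_carrier R0'c hc[OF k] hc[OF k]]
          bf_msum[of K W' M "h k" "h k"] W'c hc[OF k] by simp
      show "(1 + 1 / Gam k) * Re (ctrace (Hmat (heff G hD hR v k) * W' k))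
          - Re (ctrace (Hmat (heff G hD hR v k) * (msum M K W' + R0'))) \<ge> s2 k"
        using ineq QS s1 ctrace_H[OF hc[OF k] W'c[OF k]] ctrace_H[OF hc[OF k], of "msum M K W' + R0'"] R0'c
        unfolding Dm_def Q_def h_def by simp
    next
      have "(\<Sum>k<K. Re (ctrace (W' k))) = (\<Sum>k<K. sqnorm (w' k))"
        unfolding W'_def using ctrace_outer w'c by (auto intro!: sum.cong)
      then show "(\<Sum>k<K. Re (ctrace (W' k))) + Re (ctrace R0') \<le> P0" using pow' by simp
    qed
    then show ?thesis by (rule opt)
  qed
  have optP: "opt_P32 M K G hD hR Gam s2 P0 \<theta> d lam v wo Rn u"
    unfolding opt_P32_def using feasP boundP by blast
  have sup1: "Sup {u'. \<exists>w' R0'. feas_P32 M K G hD hR Gam s2 P0 \<theta> d lam v w' R0' u'} = u"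
    by (rule cSup_eq_maximum) (use feasP boundP in blast)+
  have sup2: "Sup {u'. \<exists>W' R0'. feas_SDR33 M K G hD hR Gam s2 P0 \<theta> d lam v W' R0' u'} = u"
    by (rule cSup_eq_maximum) (use feas opt in blast)+
  show ?thesis
    using part1 psdRn optP sup1 sup2 unfolding Rn_def Wc_def wo_def h_def by blast
qed

end
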